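(* Let $k\ge1$ be an integer and $g:\mathbb{N}\to\mathbb{R}$ be such that $F_0(g;J,L)$ is finite for all integers $J$ with $k>J$ and all $L\ge0$. Then for every $J<k$, every $L\ge0$ and every $m=1,\dots,J-1$, $F_m(g;J,L)$ is finite and $$F_m(g;J,L)=F_{m-1}(g;J,L)-F_{m-1}(g;J-1,L)-\frac1k F_{m-1}(g;J-1,L+1).$$ In addition, this recursion also holds for $m=J$ if $g(i)=1$ for all $i\in\mathbb{N}$.
   Context: $\mathbb{N}=\{0,1,2,\dots\}$. For integers $J\ge1$, $0\le m\le J$, $L\ge0$ and $g:\mathbb{N}\to\mathbb{R}$, with $\mathbf{n}=(n_1,\dots,n_J)$ and $|\mathbf{n}|=n_1+\dots+n_J$, $$F_m(g;J,L)=\sum_{\substack{n_1\ge2,\dots,n_m\ge2\\ n_{m+1}\ge0,\dots,n_J\ge0}}\frac{(L+|\mathbf{n}|)!}{n_1!\cdots n_J!}\Big(\frac1k\Big)^{|\mathbf{n}|}g(n_J).$$ *)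

theory Defs
  imports "HOL-Analysis.Analysis"
begin

text \<open>Index set of F_m(g;J,L): tuples (n_1,...,n_J) as lists of length J,
  with n_1,...,n_m >= 2 (list positions 0..m-1) and the rest >= 0.\<close>
definition Fdom :: "nat \<Rightarrow> nat \<Rightarrow> nat list set" where
  "Fdom m J = {ns. length ns = J \<and> (\<forall>i<m. 2 \<le> ns ! i)}"

definition Fterm :: "nat \<Rightarrow> (nat \<Rightarrow> real) \<Rightarrow> nat \<Rightarrow> nat list \<Rightarrow> real" where
  "Fterm k g L ns = fact (L + sum_list ns) / (\<Prod>x\<leftarrow>ns. fact x)
                     * (1 / real k) ^ sum_list ns * g (last ns)"

definition F :: "nat \<Rightarrow> (nat \<Rightarrow> real) \<Rightarrow> nat \<Rightarrow> nat \<Rightarrow> nat \<Rightarrow> real" where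
  "F k g m J L = infsum (Fterm k g L) (Fdom m J)"

text \<open>"F_m(g;J,L) is finite": the (unordered) series converges, which for real
  summands is absolute convergence.\<close>
definition F_finite :: "nat \<Rightarrow> (nat \<Rightarrow> real) \<Rightarrow> nat \<Rightarrow> nat \<Rightarrow> nat \<Rightarrow> bool" where
  "F_finite k g m J L \<longleftrightarrow> Fterm k g L summable_on Fdom m J"

end

theory Submission
  imports Defs
begin

definition insl :: "nat \<Rightarrow> nat \<Rightarrow> nat list \<Rightarrow> nat list" where
  "insl p c ns = take p ns @ c # drop p ns"

definition dell :: "nat \<Rightarrow> nat list \<Rightarrow> nat list" where
  "dell p xs = take p xs @ drop (Suc p) xs"

lemma insl_length: "length (insl p c ns) = Suc (length ns)" if "p \<le> length ns"
  using that by (simp add: insl_def)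

lemma insl_nth_lt: "i < p \<Longrightarrow> p \<le> length ns \<Longrightarrow> insl p c ns ! i = ns ! i"
  by (simp add: insl_def nth_append)

lemma insl_nth_p: "p \<le> length ns \<Longrightarrow> insl p c ns ! p = c"
  by (simp add: insl_def nth_append)

lemma dell_insl: "p \<le> length ns \<Longrightarrow> dell p (insl p c ns) = ns"
  by (simp add: insl_def dell_def)

lemma insl_dell: "p < length xs \<Longrightarrow> xs ! p = c \<Longrightarrow> insl p c (dell p xs) = xs"
  unfolding insl_def dell_def using id_take_nth_drop[of p xs, symmetric] by simp

lemma dell_length: "p < length xs \<Longrightarrow> length (dell p xs) = length xs - 1"
  by (simp add: dell_def)

lemma dell_nth_lt: "i < p \<Longrightarrow> p < length xs \<Longrightarrow> dell p xs ! i = xs ! i"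
  by (simp add: dell_def nth_append)

lemma insl_sum: "sum_list (insl p c ns) = c + sum_list ns"
proof -
  have "sum_list ns = sum_list (take p ns) + sum_list (drop p ns)"
    by (metis append_take_drop_id sum_list_append)
  then show ?thesis by (simp add: insl_def)
qed

lemma insl_prod: "(\<Prod>x\<leftarrow>insl p c ns. fact x) = (fact c :: real) * (\<Prod>x\<leftarrow>ns. fact x)"
proof -
  have "(\<Prod>x\<leftarrow>ns. fact x) = (\<Prod>x\<leftarrow>take p ns. fact x) * (\<Prod>x\<leftarrow>drop p ns. (fact x :: real))"
    by (metis append_take_drop_id map_append prod_list.append)
  then show ?thesis by (simp add: insl_def)
qed

lemma insl_last: "p < length ns \<Longrightarrow> last (insl p c ns) = last ns"
  by (simp add: insl_def)

lemma Fterm_ins0: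
  assumes "p \<le> length ns" "p < length ns \<or> (\<forall>i. g i = 1)"
  shows "Fterm k g L (insl p 0 ns) = Fterm k g L ns"
proof -
  have "g (last (insl p 0 ns)) = g (last ns)"
    using assms insl_last by auto
  then show ?thesis unfolding Fterm_def insl_sum insl_prod by simp
qed

lemma Fterm_ins1:
  assumes "p \<le> length ns" "p < length ns \<or> (\<forall>i. g i = 1)"
  shows "Fterm k g L (insl p 1 ns) = (1 / real k) * Fterm k g (Suc L) ns"
proof -
  have "g (last (insl p 1 ns)) = g (last ns)"
    using assms insl_last by auto
  then show ?thesis unfolding Fterm_def insl_sum insl_prod by simp
qed

lemma rec_split:
  assumes pJ: "p \<le> J'"
    and summ: "Fterm k g L summable_on Fdom p (Suc J')"
    and cond: "p < J' \<or> (\<forall>i. g i = 1)"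
  shows "F_finite k g (Suc p) (Suc J') L \<and>
         F k g (Suc p) (Suc J') L = F k g p (Suc J') L - F k g p J' L
            - (1 / real k) * F k g p J' (L + 1)"
proof -
  define D where "D = Fdom p (Suc J')"
  define T where "T = Fdom (Suc p) (Suc J')"
  define A where "A c = insl p c ` Fdom p J'" for c
  have A_char: "A c = {xs \<in> D. xs ! p = c}" for c
  proof
    show "A c \<subseteq> {xs \<in> D. xs ! p = c}"
    proof
      fix xs assume "xs \<in> A c"
      then obtain ns where ns: "ns \<in> Fdom p J'" "xs = insl p c ns" unfolding A_def by auto
      then have l: "length ns = J'" unfolding Fdom_def by auto
      show "xs \<in> {xs \<in> D. xs ! p = c}"
        using ns l pJ insl_length[of p ns c] insl_nth_lt[of _ p ns c] insl_nth_p[of p ns c]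
        unfolding D_def Fdom_def by auto
    qed
  next
    show "{xs \<in> D. xs ! p = c} \<subseteq> A c"
    proof
      fix xs assume xs: "xs \<in> {xs \<in> D. xs ! p = c}"
      then have l: "length xs = Suc J'" "\<forall>i<p. 2 \<le> xs ! i" "xs ! p = c"
        unfolding D_def Fdom_def by auto
      have "dell p xs \<in> Fdom p J'"
        using l pJ dell_length[of p xs] dell_nth_lt[of _ p xs] unfolding Fdom_def by auto
      moreover have "xs = insl p c (dell p xs)" using insl_dell[of p xs c] l pJ by auto
      ultimately show "xs \<in> A c" unfolding A_def by blast
    qed
  qed
  have inj: "inj_on (insl p c) (Fdom p J')" for c
    by (rule inj_on_inverseI[where g="dell p"]) (use pJ dell_insl in \<open>auto simp: Fdom_def\<close>)
  have Dsplit: "D = T \<union> (A 0 \<union> A 1)"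
  proof -
    have "xs \<in> T" if "xs \<in> D" "xs ! p \<noteq> 0" "xs ! p \<noteq> 1" for xs
      using that unfolding D_def T_def Fdom_def
      by (auto simp: less_Suc_eq)
    moreover have "T \<subseteq> D" unfolding T_def D_def Fdom_def by auto
    ultimately show ?thesis unfolding A_char by auto
  qed
  have disj1: "T \<inter> (A 0 \<union> A 1) = {}"
    unfolding A_char T_def Fdom_def by force
  have disj2: "A 0 \<inter> A 1 = {}" unfolding A_char by auto
  have sD: "Fterm k g L summable_on D" using summ D_def by simp
  have sT: "Fterm k g L summable_on T"
    by (rule summable_on_subset_banach[OF sD]) (auto simp: Dsplit)
  have sA0: "Fterm k g L summable_on A 0"
    by (rule summable_on_subset_banach[OF sD]) (auto simp: Dsplit)
  have sA1: "Fterm k g L summable_on A 1"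
    by (rule summable_on_subset_banach[OF sD]) (auto simp: Dsplit)
  have eq: "infsum (Fterm k g L) D = infsum (Fterm k g L) T + (infsum (Fterm k g L) (A 0) + infsum (Fterm k g L) (A 1))"
  proof -
    have "infsum (Fterm k g L) (A 0 \<union> A 1) = infsum (Fterm k g L) (A 0) + infsum (Fterm k g L) (A 1)"
      by (rule infsum_Un_disjoint[OF sA0 sA1 disj2])
    moreover have "infsum (Fterm k g L) (T \<union> (A 0 \<union> A 1)) = infsum (Fterm k g L) T + infsum (Fterm k g L) (A 0 \<union> A 1)"
      by (rule infsum_Un_disjoint[OF sT summable_on_Un_disjoint[OF sA0 sA1 disj2] disj1])
    ultimately show ?thesis unfolding Dsplit by simp
  qed
  have lens: "ns \<in> Fdom p J' \<Longrightarrow> p \<le> length ns \<and> (p < length ns \<or> (\<forall>i. g i = 1))" for ns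
    using pJ cond unfolding Fdom_def by auto
  have e0: "infsum (Fterm k g L) (A 0) = F k g p J' L"
    unfolding A_def F_def infsum_reindex[OF inj]
    by (rule infsum_cong) (use lens Fterm_ins0 in auto)
  have e1: "infsum (Fterm k g L) (A 1) = (1 / real k) * F k g p J' (L + 1)"
  proof -
    have "infsum (Fterm k g L) (A 1) = infsum (\<lambda>ns. (1 / real k) * Fterm k g (Suc L) ns) (Fdom p J')"
      unfolding A_def infsum_reindex[OF inj]
      by (rule infsum_cong) (use lens Fterm_ins1 in auto)
    also have "\<dots> = (1 / real k) * F k g p J' (L + 1)"
      unfolding F_def Suc_eq_plus1 by (rule infsum_cmult_right')
    finally show ?thesis .
  qed
  show ?thesis
    using eq e0 e1 sT unfolding F_finite_def F_def T_def D_def by simp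
qed

theorem lemmaA1:
  fixes k :: nat and g :: "nat \<Rightarrow> real"
  assumes "1 \<le> k"
    and "\<forall>J L. 1 \<le> J \<longrightarrow> J < k \<longrightarrow> F_finite k g 0 J L"
  shows "(\<forall>J L m. J < k \<longrightarrow> 1 \<le> m \<longrightarrow> m \<le> J - 1 \<longrightarrow>
            F_finite k g m J L \<and>
            F k g m J L = F k g (m - 1) J L - F k g (m - 1) (J - 1) L
                          - (1 / real k) * F k g (m - 1) (J - 1) (L + 1))
       \<and> ((\<forall>i. g i = 1) \<longrightarrow>
          (\<forall>J L. 1 \<le> J \<longrightarrow> J < k \<longrightarrow>
            F k g J J L = F k g (J - 1) J L - F k g (J - 1) (J - 1) L
                          - (1 / real k) * F k g (J - 1) (J - 1) (L + 1)))"
proof -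
  have summ: "Fterm k g L summable_on Fdom p J" if "1 \<le> J" "J < k" for p J L
  proof -
    have "Fterm k g L summable_on Fdom 0 J" using assms(2) that unfolding F_finite_def by auto
    then show ?thesis by (rule summable_on_subset_banach) (auto simp: Fdom_def)
  qed
  have P1: "F_finite k g m J L \<and>
            F k g m J L = F k g (m - 1) J L - F k g (m - 1) (J - 1) L
                          - (1 / real k) * F k g (m - 1) (J - 1) (L + 1)"
    if h: "J < k" "1 \<le> m" "m \<le> J - 1" for J L m
  proof -
    obtain p where p: "m = Suc p" using h by (cases m) auto
    obtain J' where J': "J = Suc J'" using h by (cases J) auto
    note pj = p J'
    have "F_finite k g (Suc p) (Suc J') L \<and>
         F k g (Suc p) (Suc J') L = F k g p (Suc J') L - F k g p J' L
            - (1 / real k) * F k g p J' (L + 1)"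
      by (rule rec_split) (use h pj summ in auto)
    then show ?thesis using pj by simp
  qed
  have P2: "F k g J J L = F k g (J - 1) J L - F k g (J - 1) (J - 1) L
                          - (1 / real k) * F k g (J - 1) (J - 1) (L + 1)"
    if g1: "\<forall>i. g i = 1" and h: "1 \<le> J" "J < k" for J L
  proof -
    obtain J' where pj: "J = Suc J'" using h by (cases J) auto
    have "F_finite k g (Suc J') (Suc J') L \<and>
         F k g (Suc J') (Suc J') L = F k g J' (Suc J') L - F k g J' J' L
            - (1 / real k) * F k g J' J' (L + 1)"
      by (rule rec_split) (use h pj summ g1 in auto)
    then show ?thesis using pj by simp
  qed
  show ?thesis using P1 P2 by blast
qed

end
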